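(* Suppose Assumption A2 holds and $f$ is continuously differentiable, let $\beta>0$, and let $(x(t),y(t))$, $t\ge0$, be the solution of the prediction-correction dynamics $$\dot x=-F(x,y),\qquad \dot y=-[\nabla^2_{yy}g(x,y)]^{-1}\big[\beta\nabla_y g(x,y)+\nabla^2_{yx}g(x,y)\dot x\big].$$ Then for all $t\ge0$, $$\|y(t)-y^\star(x(t))\|\le\frac{1}{\mu_g}\|\nabla_y g(x(0),y(0))\|e^{-\beta t}.$$
   Context: $f,g:\mathbb{R}^n\times\mathbb{R}^m\to\mathbb{R}$; $\nabla^2_{yx}g(x,y)\in\mathbb{R}^{m\times n}$ is the Jacobian with respect to $x$ of $\nabla_y g(x,y)$, $\nabla^2_{yy}g$ the Hessian in $y$. Assumption A2: $g$ is twice continuously differentiable; $g(x,\cdot)$ is $\mu_g$-strongly convex for each $x$; $\nabla_y g(x,\cdot)$ is $L^g_{yy}$-Lipschitz for each $x$ and $\nabla_y g(\cdot,y)$ is $L^g_{yx}$-Lipschitz for each $y$; $\nabla^2_{yx}g$, $\nabla^2_{yy}g$ are Lipschitz on $\mathbb{R}^n\times\mathbb{R}^m$. $y^\star(x):=\arg\min_y g(x,y)$ and $F(x,y):=\nabla_x f(x,y)-\nabla^2_{yx}g(x,y)^\top[\nabla^2_{yy}g(x,y)]^{-1}\nabla_y f(x,y)$. *)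

theory Defs
  imports "HOL-Analysis.Analysis"
begin

definition strongly_convex_on :: "real \<Rightarrow> 'a::real_normed_vector set \<Rightarrow> ('a \<Rightarrow> real) \<Rightarrow> bool" where
  "strongly_convex_on mu S h \<longleftrightarrow> convex S \<and>
     (\<forall>u\<in>S. \<forall>v\<in>S. \<forall>t::real. 0 \<le> t \<and> t \<le> 1 \<longrightarrow>
        h (t *\<^sub>R u + (1 - t) *\<^sub>R v) \<le> t * h u + (1 - t) * h v - mu / 2 * t * (1 - t) * (norm (u - v))\<^sup>2)"

definition ystar :: "('a \<Rightarrow> 'b \<Rightarrow> real) \<Rightarrow> 'a \<Rightarrow> 'b" where
  "ystar g x = arg_min (g x) (\<lambda>_. True)"

text \<open>F(x,y) = grad_x f - (Hyx g)^T (Hyy g)^{-1} grad_y f, with the derivatives passed as functions.\<close>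
definition Fhyper ::
  "(real^'n \<Rightarrow> real^'m \<Rightarrow> real^'n) \<Rightarrow> (real^'n \<Rightarrow> real^'m \<Rightarrow> real^'m)
   \<Rightarrow> (real^'n \<Rightarrow> real^'m \<Rightarrow> real^'n^'m) \<Rightarrow> (real^'n \<Rightarrow> real^'m \<Rightarrow> real^'m^'m)
   \<Rightarrow> real^'n \<Rightarrow> real^'m \<Rightarrow> real^'n" where
  "Fhyper fx fy Hyx Hyy x y = fx x y - transpose (Hyx x y) *v (matrix_inv (Hyy x y) *v fy x y)"

end

theory Submission
  imports Defs
begin


lemma FO:
  fixes G :: "'b::real_inner \<Rightarrow> real"
  assumes d: "(G has_derivative (\<lambda>k. D \<bullet> k)) (at v)"
    and sc: "strongly_convex_on mu UNIV G"
  shows "G u \<ge> G v + D \<bullet> (u - v) + mu/2 * (norm (u - v))\<^sup>2"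
proof -
  define d where "d = u - v"
  have lin: "((\<lambda>s. v + s *\<^sub>R d) has_derivative (\<lambda>s. s *\<^sub>R d)) (at 0)"
    by (auto intro!: derivative_eq_intros)
  have "((\<lambda>s. G (v + s *\<^sub>R d)) has_derivative (\<lambda>s. D \<bullet> (s *\<^sub>R d))) (at 0)"
    using diff_chain_at[OF lin, of G "\<lambda>k. D \<bullet> k"] d by (simp add: o_def)
  hence "((\<lambda>s. G (v + s *\<^sub>R d)) has_real_derivative (D \<bullet> d)) (at 0)"
    by (simp add: has_field_derivative_def mult.commute[of _ "D \<bullet> d"])
  hence lim: "((\<lambda>s. (G (v + s *\<^sub>R d) - G v) / s) \<longlongrightarrow> D \<bullet> d) (at_right 0)"
    unfolding has_field_derivative_iff by (auto intro: tendsto_mono at_le)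
  have lim2: "((\<lambda>s. G u - G v - mu/2 * (1 - s) * (norm d)\<^sup>2) \<longlongrightarrow> G u - G v - mu/2 * (1 - 0) * (norm d)\<^sup>2) (at_right 0)"
    by (intro tendsto_intros)
  have ev: "eventually (\<lambda>s. (G (v + s *\<^sub>R d) - G v) / s \<le> G u - G v - mu/2 * (1 - s) * (norm d)\<^sup>2) (at_right (0::real))"
  proof -
    have "eventually (\<lambda>s::real. s \<in> {0<..<1}) (at_right 0)"
      by (rule eventually_at_right_real) auto
    thus ?thesis
    proof (rule eventually_mono)
      fix s :: real assume s: "s \<in> {0<..<1}"
      have eq: "v + s *\<^sub>R d = s *\<^sub>R u + (1 - s) *\<^sub>R v" by (simp add: d_def algebra_simps)
      have "G (s *\<^sub>R u + (1 - s) *\<^sub>R v) \<le> s * G u + (1 - s) * G v - mu / 2 * s * (1 - s) * (norm (u - v))\<^sup>2"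
        using sc s unfolding strongly_convex_on_def by auto
      hence "G (v + s *\<^sub>R d) - G v \<le> s * (G u - G v - mu/2 * (1 - s) * (norm d)\<^sup>2)"
        unfolding eq d_def by (simp add: algebra_simps)
      thus "(G (v + s *\<^sub>R d) - G v) / s \<le> G u - G v - mu/2 * (1 - s) * (norm d)\<^sup>2"
        using s by (simp add: divide_le_eq mult.commute)
    qed
  qed
  have "D \<bullet> d \<le> G u - G v - mu/2 * (1 - 0) * (norm d)\<^sup>2"
    using tendsto_le[OF trivial_limit_at_right_real lim2 lim ev] .
  thus ?thesis by (simp add: d_def)
qed



lemma upto1:
  fixes c A :: real
  assumes "\<And>t. 0 \<le> t \<Longrightarrow> t < 1 \<Longrightarrow> t * c \<le> A"
  shows "c \<le> A"
proof -
  have lim: "((\<lambda>t. t * c) \<longlongrightarrow> 1 * c) (at_left 1)" by (intro tendsto_intros)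
  have "eventually (\<lambda>t::real. t \<in> {0<..<1}) (at_left 1)"
    by (rule eventually_at_left_real) auto
  hence "eventually (\<lambda>t. t * c \<le> A) (at_left (1::real))"
    by (rule eventually_mono) (use assms in auto)
  from tendsto_upperbound[OF lim this] show ?thesis by simp
qed

lemma argmin_bound:
  fixes G :: "'b::euclidean_space \<Rightarrow> real"
  assumes d: "\<And>v. (G has_derivative (\<lambda>k. Dg v \<bullet> k)) (at v)"
    and sc: "strongly_convex_on mu UNIV G" and mu: "mu > 0"
  shows "mu * norm (y - arg_min G (\<lambda>_. True)) \<le> norm (Dg y)"
proof -
  define R where "R = 2 * norm (Dg 0) / mu"
  have cont: "continuous_on UNIV G"
    by (intro continuous_at_imp_continuous_on ballI has_derivative_continuous[OF d])
  obtain z where z: "z \<in> cball 0 R" "\<And>w. w \<in> cball 0 R \<Longrightarrow> G z \<le> G w"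
  proof -
    have "R \<ge> 0" using R_def mu by simp
    hence "cball 0 R \<noteq> {}" by simp
    moreover have "continuous_on (cball 0 R) G" using cont continuous_on_subset by blast
    ultimately obtain z where "z \<in> cball 0 R" "\<forall>w\<in>cball 0 R. G z \<le> G w"
      using continuous_attains_inf[OF compact_cball] by metis
    thus ?thesis using that by blast
  qed
  have R0: "R \<ge> 0" using R_def mu by simp
  have z0: "G z \<le> G 0" using z(2)[of 0] R0 by auto
  have zmin: "G z \<le> G w" for w
  proof (cases "w \<in> cball 0 R")
    case True thus ?thesis using z by auto
  next
    case False
    hence nw: "norm w > R" by auto
    have fo: "G w \<ge> G 0 + Dg 0 \<bullet> (w - 0) + mu/2 * (norm (w - 0))\<^sup>2"
      by (rule FO[OF d sc])
    have "Dg 0 \<bullet> w \<ge> - (norm (Dg 0) * norm w)"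
      using Cauchy_Schwarz_ineq2[of "Dg 0" w] by (simp add: abs_le_iff)
    moreover have "mu/2 * (norm w)^2 > norm (Dg 0) * norm w"
    proof -
      have "norm w > 0" using nw R_def mu by (smt (verit) divide_nonneg_pos norm_ge_zero mult_nonneg_nonneg)
      moreover have "mu/2 * norm w > norm (Dg 0)" using nw R_def mu by (simp add: field_simps)
      ultimately show ?thesis by (simp add: power2_eq_square)
    qed
    ultimately have "G w > G 0" using fo by simp
    thus ?thesis using z0 by simp
  qed
  define ys where "ys = arg_min G (\<lambda>_. True)"
  have "is_arg_min G (\<lambda>_. True) ys"
    unfolding ys_def arg_min_def
    by (rule someI[of _ z]) (use zmin in \<open>auto simp: is_arg_min_def not_less\<close>)
  hence ysmin: "G ys \<le> G w" for w by (auto simp: is_arg_min_def not_less)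
  define dd where "dd = norm (y - ys)"
  have A: "mu/2 * dd^2 \<le> G y - G ys"
  proof (rule upto1)
    fix t :: real assume t: "0 \<le> t" "t < 1"
    have "G ys \<le> G (t *\<^sub>R ys + (1 - t) *\<^sub>R y)" by (rule ysmin)
    also have "\<dots> \<le> t * G ys + (1 - t) * G y - mu / 2 * t * (1 - t) * (norm (ys - y))\<^sup>2"
      using sc t unfolding strongly_convex_on_def by auto
    finally have "(1 - t) * (t * (mu/2 * dd^2)) \<le> (1 - t) * (G y - G ys)"
      by (simp add: dd_def norm_minus_commute algebra_simps)
    thus "t * (mu / 2 * dd\<^sup>2) \<le> G y - G ys" using t by simp
  qed
  have B: "G ys \<ge> G y + Dg y \<bullet> (ys - y) + mu/2 * (norm (ys - y))\<^sup>2"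
    by (rule FO[OF d sc])
  have C: "Dg y \<bullet> (ys - y) \<ge> - (norm (Dg y) * dd)"
    using Cauchy_Schwarz_ineq2[of "Dg y" "ys - y"] by (simp add: abs_le_iff dd_def norm_minus_commute)
  have "mu * dd^2 \<le> norm (Dg y) * dd"
    using A B C by (simp add: dd_def norm_minus_commute)
  hence "mu * dd \<le> norm (Dg y)" if "dd > 0"
    using that by (simp add: power2_eq_square)
  moreover have "dd \<ge> 0" by (simp add: dd_def)
  ultimately show ?thesis
    by (cases "dd = 0") (auto simp: ys_def dd_def)
qed

lemma hess_pd:
  fixes G :: "'b::real_inner \<Rightarrow> real"
  assumes d: "\<And>v. (G has_derivative (\<lambda>k. Dg v \<bullet> k)) (at v)"
    and sc: "strongly_convex_on mu UNIV G"
    and dd: "(Dg has_derivative H) (at b)"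
  shows "H k \<bullet> k \<ge> mu * (norm k)\<^sup>2"
proof -
  have mono: "(Dg u - Dg v) \<bullet> (u - v) \<ge> mu * (norm (u - v))\<^sup>2" for u v
    using FO[OF d sc, of u v] FO[OF d sc, of v u]
    by (simp add: inner_diff_left inner_diff_right norm_minus_commute inner_commute algebra_simps)
  have lin: "((\<lambda>s. b + s *\<^sub>R k) has_derivative (\<lambda>s. s *\<^sub>R k)) (at 0)"
    by (auto intro!: derivative_eq_intros)
  have "((\<lambda>s. Dg (b + s *\<^sub>R k)) has_derivative (\<lambda>s. H (s *\<^sub>R k))) (at 0)"
    using diff_chain_at[OF lin, of Dg H] dd by (simp add: o_def)
  hence "((\<lambda>s. Dg (b + s *\<^sub>R k) \<bullet> k) has_derivative (\<lambda>s. H (s *\<^sub>R k) \<bullet> k)) (at 0)"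
    by (intro derivative_eq_intros) auto
  moreover have "H (s *\<^sub>R k) = s *\<^sub>R H k" for s
    using dd has_derivative_bounded_linear linear_cmul bounded_linear.linear by blast
  ultimately have "((\<lambda>s. Dg (b + s *\<^sub>R k) \<bullet> k) has_real_derivative (H k \<bullet> k)) (at 0)"
    by (simp add: has_field_derivative_def mult.commute[of _ "H k \<bullet> k"])
  hence lim: "((\<lambda>s. (Dg (b + s *\<^sub>R k) \<bullet> k - Dg b \<bullet> k) / s) \<longlongrightarrow> H k \<bullet> k) (at_right 0)"
    unfolding has_field_derivative_iff by (auto intro: tendsto_mono at_le)
  have "eventually (\<lambda>s::real. s \<in> {0<..<1}) (at_right 0)"
    by (rule eventually_at_right_real) auto
  hence "eventually (\<lambda>s. mu * (norm k)\<^sup>2 \<le> (Dg (b + s *\<^sub>R k) \<bullet> k - Dg b \<bullet> k) / s) (at_right (0::real))"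
  proof (rule eventually_mono)
    fix s :: real assume s: "s \<in> {0<..<1}"
    have "mu * (norm (s *\<^sub>R k))\<^sup>2 \<le> (Dg (b + s *\<^sub>R k) - Dg b) \<bullet> (s *\<^sub>R k)"
      using mono[of "b + s *\<^sub>R k" b] by simp
    hence "s * (s * (mu * (norm k)\<^sup>2)) \<le> s * (Dg (b + s *\<^sub>R k) \<bullet> k - Dg b \<bullet> k)"
      using s by (simp add: inner_diff_left power2_eq_square algebra_simps)
    hence "s * (mu * (norm k)\<^sup>2) \<le> (Dg (b + s *\<^sub>R k) \<bullet> k - Dg b \<bullet> k)"
      using s by (simp add: mult_le_cancel_left)
    thus "mu * (norm k)\<^sup>2 \<le> (Dg (b + s *\<^sub>R k) \<bullet> k - Dg b \<bullet> k) / s"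
      using s by (simp add: le_divide_eq mult.commute)
  qed
  from tendsto_lowerbound[OF lim this] show ?thesis by simp
qed



lemma partial_y:
  fixes F :: "'a::real_normed_vector \<Rightarrow> 'b::real_normed_vector \<Rightarrow> 'c::real_normed_vector"
  assumes "((\<lambda>p. F (fst p) (snd p)) has_derivative (\<lambda>(h, k). A h + B k)) (at (a, b))"
    and "linear A"
  shows "(F a has_derivative B) (at b)"
proof -
  have lin: "((\<lambda>y. (a, y)) has_derivative (\<lambda>k. (0, k))) (at b)"
    by (auto intro!: derivative_eq_intros)
  have "((\<lambda>y. F a y) has_derivative (\<lambda>k. A 0 + B k)) (at b)"
    using diff_chain_at[OF lin assms(1)] by (simp add: o_def)
  thus ?thesis using linear_0[OF assms(2)] by simp
qed

lemma inv_right: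
  fixes A :: "real^'m^'m"
  assumes "\<And>k. (A *v k) \<bullet> k \<ge> mu * (norm k)\<^sup>2" "mu > 0"
  shows "A *v (matrix_inv A *v w) = w"
proof -
  have "inj ((*v) A)"
  proof (rule injI)
    fix k1 k2 assume "A *v k1 = A *v k2"
    hence "A *v (k1 - k2) = 0" by (simp add: matrix_vector_mult_diff_distrib)
    hence "mu * (norm (k1 - k2))\<^sup>2 \<le> 0" using assms(1)[of "k1 - k2"] by simp
    thus "k1 = k2" using assms(2) by (simp add: mult_le_0_iff)
  qed
  hence "invertible A" using matrix_left_invertible_injective invertible_left_inverse by blast
  hence "A ** matrix_inv A = mat 1 \<and> matrix_inv A ** A = mat 1"
    unfolding matrix_inv_def invertible_def by (rule someI_ex)
  thus ?thesis by (simp add: matrix_vector_mul_assoc)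
qed

theorem proposition2:
  fixes f g :: "real^'n \<Rightarrow> real^'m \<Rightarrow> real"
    and fx gx :: "real^'n \<Rightarrow> real^'m \<Rightarrow> real^'n"
    and fy gy :: "real^'n \<Rightarrow> real^'m \<Rightarrow> real^'m"
    and Hxx :: "real^'n \<Rightarrow> real^'m \<Rightarrow> real^'n^'n"
    and Hxy :: "real^'n \<Rightarrow> real^'m \<Rightarrow> real^'m^'n"
    and Hyx :: "real^'n \<Rightarrow> real^'m \<Rightarrow> real^'n^'m"
    and Hyy :: "real^'n \<Rightarrow> real^'m \<Rightarrow> real^'m^'m"
    and mu_g L_yy L_yx beta :: real
    and x :: "real \<Rightarrow> real^'n" and y :: "real \<Rightarrow> real^'m"
  assumes
    \<comment> \<open>f continuously differentiable, with gradient blocks fx, fy\<close>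
    f_deriv: "\<And>a b. ((\<lambda>p. f (fst p) (snd p)) has_derivative
                 (\<lambda>(h, k). fx a b \<bullet> h + fy a b \<bullet> k)) (at (a, b))"
    and f_cont: "continuous_on UNIV (\<lambda>p. fx (fst p) (snd p))"
                "continuous_on UNIV (\<lambda>p. fy (fst p) (snd p))"
    \<comment> \<open>Assumption A2: g twice continuously differentiable\<close>
    and g_deriv: "\<And>a b. ((\<lambda>p. g (fst p) (snd p)) has_derivative
                 (\<lambda>(h, k). gx a b \<bullet> h + gy a b \<bullet> k)) (at (a, b))"
    and gx_deriv: "\<And>a b. ((\<lambda>p. gx (fst p) (snd p)) has_derivative
                 (\<lambda>(h, k). Hxx a b *v h + Hxy a b *v k)) (at (a, b))"
    and gy_deriv: "\<And>a b. ((\<lambda>p. gy (fst p) (snd p)) has_derivative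
                 (\<lambda>(h, k). Hyx a b *v h + Hyy a b *v k)) (at (a, b))"
    and H_cont: "continuous_on UNIV (\<lambda>p. Hxx (fst p) (snd p))"
                "continuous_on UNIV (\<lambda>p. Hxy (fst p) (snd p))"
                "continuous_on UNIV (\<lambda>p. Hyx (fst p) (snd p))"
    "continuous_on UNIV (\<lambda>p. Hyy (fst p) (snd p))"
    \<comment> \<open>Assumption A2: strong convexity and Lipschitz conditions\<close>
    and mu_pos: "mu_g > 0"
    and g_sc: "\<And>a. strongly_convex_on mu_g UNIV (g a)"
    and gy_lip_y: "\<And>a. L_yy-lipschitz_on UNIV (gy a)"
    and gy_lip_x: "\<And>b. L_yx-lipschitz_on UNIV (\<lambda>a. gy a b)"
    and Hyx_lip: "\<exists>L. L-lipschitz_on UNIV (\<lambda>p. Hyx (fst p) (snd p))"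
    and Hyy_lip: "\<exists>L. L-lipschitz_on UNIV (\<lambda>p. Hyy (fst p) (snd p))"
    \<comment> \<open>the prediction-correction dynamics\<close>
    and beta_pos: "beta > 0"
    and x_ode: "\<And>t. t \<ge> 0 \<Longrightarrow>
       (x has_vector_derivative - Fhyper fx fy Hyx Hyy (x t) (y t)) (at t within {0..})"
    and y_ode: "\<And>t. t \<ge> 0 \<Longrightarrow>
       (y has_vector_derivative
          - (matrix_inv (Hyy (x t) (y t)) *v
               (beta *\<^sub>R gy (x t) (y t) + Hyx (x t) (y t) *v (- Fhyper fx fy Hyx Hyy (x t) (y t)))))
         (at t within {0..})"
  shows "\<forall>t\<ge>0. norm (y t - ystar g (x t))
            \<le> (1 / mu_g) * norm (gy (x 0) (y 0)) * exp (- beta * t)"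
proof -
  have lin0: "linear (\<lambda>h. Hyx a b *v h)" for a b by (simp add: matrix_vector_mul_linear)
  have gpart: "(g a has_derivative (\<lambda>k. gy a v \<bullet> k)) (at v)" for a v
    by (rule partial_y[OF g_deriv]) (simp add: bounded_linear_inner_right bounded_linear.linear)
  have gypart: "(gy a has_derivative (\<lambda>k. Hyy a v *v k)) (at v)" for a v
    by (rule partial_y[OF gy_deriv], rule lin0)
  have pd: "(Hyy a b *v k) \<bullet> k \<ge> mu_g * (norm k)\<^sup>2" for a b k
    by (rule hess_pd[OF gpart g_sc gypart])
  have bnd: "mu_g * norm (v - ystar g a) \<le> norm (gy a v)" for a v
    unfolding ystar_def by (rule argmin_bound[OF gpart g_sc mu_pos])
  define X' where "X' t = - Fhyper fx fy Hyx Hyy (x t) (y t)" for t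
  define Y' where "Y' t = - (matrix_inv (Hyy (x t) (y t)) *v
               (beta *\<^sub>R gy (x t) (y t) + Hyx (x t) (y t) *v X' t))" for t
  define h where "h t = gy (x t) (y t)" for t
  have hd: "(h has_vector_derivative (- beta *\<^sub>R h t)) (at t within {0..})" if t: "t \<ge> 0" for t
  proof -
    have p: "((\<lambda>t. (x t, y t)) has_derivative (\<lambda>s. (s *\<^sub>R X' t, s *\<^sub>R Y' t))) (at t within {0..})"
      using x_ode[OF t] y_ode[OF t] unfolding X'_def Y'_def has_vector_derivative_def
      by (rule has_derivative_Pair)
    have gd: "((\<lambda>p. gy (fst p) (snd p)) has_derivative (\<lambda>(h, k). Hyx (x t) (y t) *v h + Hyy (x t) (y t) *v k))
        (at (x t, y t) within (\<lambda>t. (x t, y t)) ` {0..})"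
      using gy_deriv has_derivative_at_withinI by blast
    have "(h has_derivative (\<lambda>s. Hyx (x t) (y t) *v (s *\<^sub>R X' t) + Hyy (x t) (y t) *v (s *\<^sub>R Y' t))) (at t within {0..})"
      using diff_chain_within[OF p gd] unfolding h_def[abs_def] by (simp add: o_def)
    moreover have "Hyx (x t) (y t) *v (s *\<^sub>R X' t) + Hyy (x t) (y t) *v (s *\<^sub>R Y' t) = s *\<^sub>R (- beta *\<^sub>R h t)" for s
    proof -
      have neg: "A *v (- v) = - (A *v v)" for A :: "real^'m^'m" and v
        by (simp add: matrix_vector_mult_def vec_eq_iff sum_negf)
      have E: "Hyy (x t) (y t) *v Y' t = - (beta *\<^sub>R gy (x t) (y t) + Hyx (x t) (y t) *v X' t)"
        unfolding Y'_def neg using inv_right[OF pd mu_pos] by simp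
      have "Hyx (x t) (y t) *v (s *\<^sub>R X' t) + Hyy (x t) (y t) *v (s *\<^sub>R Y' t)
          = s *\<^sub>R (Hyy (x t) (y t) *v Y' t + Hyx (x t) (y t) *v X' t)"
        by (simp add: matrix_vector_mult_scaleR algebra_simps)
      also have "\<dots> = s *\<^sub>R (- beta *\<^sub>R h t)" using E by (simp add: h_def)
      finally show ?thesis .
    qed
    ultimately show ?thesis unfolding has_vector_derivative_def by simp
  qed
  define k where "k t = exp (beta * t) *\<^sub>R h t" for t
  have kd: "(k has_derivative (\<lambda>_. 0)) (at t within {0..})" if t: "t \<ge> 0" for t
  proof -
    have e: "((\<lambda>t. exp (beta * t)) has_real_derivative (exp (beta * t) * beta)) (at t within {0..})"
      by (auto intro!: derivative_eq_intros)
    have "(k has_vector_derivative (exp (beta * t) *\<^sub>R (- beta *\<^sub>R h t) + (exp (beta * t) * beta) *\<^sub>R h t)) (at t within {0..})"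
      unfolding k_def by (rule has_vector_derivative_scaleR[OF e hd[OF t]])
    thus ?thesis by (simp add: has_vector_derivative_def)
  qed
  obtain c where c: "\<And>t. t \<in> {0..} \<Longrightarrow> k t = c"
    using has_derivative_zero_constant[of "{0::real..}" k] kd by auto
  show ?thesis
  proof (intro allI impI)
    fix t :: real assume t: "t \<ge> 0"
    have "k t = k 0" using c t by simp
    hence e: "exp (beta * t) *\<^sub>R h t = h 0" unfolding k_def by simp
    have "h t = exp (- beta * t) *\<^sub>R (exp (beta * t) *\<^sub>R h t)"
      by (simp add: scaleR_scaleR flip: exp_add)
    hence "h t = exp (- beta * t) *\<^sub>R h 0" using e by simp
    hence nh: "norm (h t) = exp (- beta * t) * norm (h 0)" by simp
    have "mu_g * norm (y t - ystar g (x t)) \<le> exp (- beta * t) * norm (gy (x 0) (y 0))"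
      using bnd[of "y t" "x t"] nh unfolding h_def by simp
    thus "norm (y t - ystar g (x t)) \<le> (1 / mu_g) * norm (gy (x 0) (y 0)) * exp (- beta * t)"
      using mu_pos by (simp add: field_simps)
  qed
qed


end
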